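(* The Lack model structure on $2\mathrm{Cat}$ is right-induced along $\mathbb{H}\colon 2\mathrm{Cat}\to\mathrm{DblCat}$ (from the adjunction $L\dashv\mathbb{H}$) from the model structure on $\mathrm{DblCat}$ right-induced along $(\mathbf{H},\mathcal{V})$ from two copies of the Lack model structure. That is, a 2-functor $F\colon\mathcal{A}\to\mathcal{B}$ is a biequivalence (resp.\ Lack fibration) if and only if $\mathbb{H}F\colon\mathbb{H}\mathcal{A}\to\mathbb{H}\mathcal{B}$ is a weak equivalence (resp.\ fibration) in $\mathrm{DblCat}$, i.e.\ a double biequivalence (resp.\ double fibration).
   Context: $\mathbb{H}\colon 2\mathrm{Cat}\to\mathrm{DblCat}$ sends a 2-category to the double category with the same objects, its morphisms as horizontal morphisms, only identity vertical morphisms, and its 2-cells as squares; it has a left adjoint $L$. $\mathbf{H}$ sends a double category to its underlying horizontal 2-category (objects, horizontal morphisms, squares with identity vertical boundaries as 2-cells). $\mathcal{V}\mathbb{A}$ is the 2-category with vertical morphisms as objects, squares as morphisms, and as 2-cells from $\alpha\colon(u\,{}^{a}_{b}\,v)$ to $\beta\colon(u\,{}^{c}_{d}\,v)$ pairs of squares with identity vertical boundaries $\sigma_0\colon a\Rightarrow c$, $\sigma_1\colon b\Rightarrow d$ with $\sigma_0$ on top of $\beta$ equal to $\alpha$ on top of $\sigma_1$. A biequivalence is a 2-functor essentially surjective up to equivalence on objects, essentially full up to invertible 2-cell on morphisms and fully faithful on 2-cells; a Lack fibration is a 2-functor $G$ for which equivalences $b\colon B\to GC$ lift to equivalences $a$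 with $Ga=b$, and invertible 2-cells $\beta\colon b\cong Gc$ lift to invertible 2-cells $\alpha\colon a\cong c$ with $G\alpha=\beta$. The Lack model structure on $2\mathrm{Cat}$ has these as weak equivalences and fibrations. The model structure on $\mathrm{DblCat}$ has as weak equivalences (resp.\ fibrations) the double functors $F$ with $\mathbf{H}F$ and $\mathcal{V}F$ biequivalences (resp.\ Lack fibrations); these are called double biequivalences (resp.\ double fibrations). *)

theory Defs
  imports Main
begin

section \<open>Strict 2-categories\<close>

text \<open>A strict 2-category given by carrier sets of objects, 1-cells and 2-cells
 together with (total) operations that are meaningful on composable data.
 Conventions: comp g f = g \<circ> f (defined when cod f = dom g);
 vcomp \<beta> \<alpha> = vertical composite \<alpha> then \<beta> (defined when tgt2 \<alpha> = src2 \<beta>);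
 hcomp \<beta> \<alpha> = horizontal composite, \<alpha> : f \<Rightarrow> g : x \<rightarrow> y, \<beta> : h \<Rightarrow> k : y \<rightarrow> z,
 giving h\<circ>f \<Rightarrow> k\<circ>g.\<close>

record ('o,'m,'c) twocat =
  Ob :: "'o set"
  Hom :: "'m set"
  Cell :: "'c set"
  hdom :: "'m \<Rightarrow> 'o"
  hcod :: "'m \<Rightarrow> 'o"
  comp :: "'m \<Rightarrow> 'm \<Rightarrow> 'm"
  idm :: "'o \<Rightarrow> 'm"
  src2 :: "'c \<Rightarrow> 'm"
  tgt2 :: "'c \<Rightarrow> 'm"
  vcomp :: "'c \<Rightarrow> 'c \<Rightarrow> 'c"
  hcomp :: "'c \<Rightarrow> 'c \<Rightarrow> 'c"
  id2 :: "'m \<Rightarrow> 'c"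

definition is_2cat :: "('o,'m,'c) twocat \<Rightarrow> bool" where
  "is_2cat C \<longleftrightarrow>
     (\<forall>f\<in>Hom C. hdom C f \<in> Ob C \<and> hcod C f \<in> Ob C)
   \<and> (\<forall>x\<in>Ob C. idm C x \<in> Hom C \<and> hdom C (idm C x) = x \<and> hcod C (idm C x) = x)
   \<and> (\<forall>f\<in>Hom C. \<forall>g\<in>Hom C. hcod C f = hdom C g \<longrightarrow>
        comp C g f \<in> Hom C \<and> hdom C (comp C g f) = hdom C f \<and> hcod C (comp C g f) = hcod C g)
   \<and> (\<forall>f\<in>Hom C. \<forall>g\<in>Hom C. \<forall>h\<in>Hom C. hcod C f = hdom C g \<longrightarrow> hcod C g = hdom C h \<longrightarrow>
        comp C h (comp C g f) = comp C (comp C h g) f)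
   \<and> (\<forall>f\<in>Hom C. comp C (idm C (hcod C f)) f = f \<and> comp C f (idm C (hdom C f)) = f)
   \<and> (\<forall>a\<in>Cell C. src2 C a \<in> Hom C \<and> tgt2 C a \<in> Hom C
        \<and> hdom C (src2 C a) = hdom C (tgt2 C a) \<and> hcod C (src2 C a) = hcod C (tgt2 C a))
   \<and> (\<forall>f\<in>Hom C. id2 C f \<in> Cell C \<and> src2 C (id2 C f) = f \<and> tgt2 C (id2 C f) = f)
   \<and> (\<forall>a\<in>Cell C. \<forall>b\<in>Cell C. tgt2 C a = src2 C b \<longrightarrow>
        vcomp C b a \<in> Cell C \<and> src2 C (vcomp C b a) = src2 C a \<and> tgt2 C (vcomp C b a) = tgt2 C b)
   \<and> (\<forall>a\<in>Cell C. \<forall>b\<in>Cell C. \<forall>c\<in>Cell C. tgt2 C a = src2 C b \<longrightarrow> tgt2 C b = src2 C c \<longrightarrow>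
        vcomp C c (vcomp C b a) = vcomp C (vcomp C c b) a)
   \<and> (\<forall>a\<in>Cell C. vcomp C (id2 C (tgt2 C a)) a = a \<and> vcomp C a (id2 C (src2 C a)) = a)
   \<and> (\<forall>a\<in>Cell C. \<forall>b\<in>Cell C. hcod C (src2 C a) = hdom C (src2 C b) \<longrightarrow>
        hcomp C b a \<in> Cell C \<and> src2 C (hcomp C b a) = comp C (src2 C b) (src2 C a)
        \<and> tgt2 C (hcomp C b a) = comp C (tgt2 C b) (tgt2 C a))
   \<and> (\<forall>a\<in>Cell C. \<forall>b\<in>Cell C. \<forall>c\<in>Cell C. hcod C (src2 C a) = hdom C (src2 C b) \<longrightarrow>
        hcod C (src2 C b) = hdom C (src2 C c) \<longrightarrow>
        hcomp C c (hcomp C b a) = hcomp C (hcomp C c b) a)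
   \<and> (\<forall>a\<in>Cell C. hcomp C (id2 C (idm C (hcod C (src2 C a)))) a = a
        \<and> hcomp C a (id2 C (idm C (hdom C (src2 C a)))) = a)
   \<and> (\<forall>f\<in>Hom C. \<forall>g\<in>Hom C. hcod C f = hdom C g \<longrightarrow>
        hcomp C (id2 C g) (id2 C f) = id2 C (comp C g f))
   \<and> (\<forall>a\<in>Cell C. \<forall>a'\<in>Cell C. \<forall>b\<in>Cell C. \<forall>b'\<in>Cell C.
        tgt2 C a = src2 C a' \<longrightarrow> tgt2 C b = src2 C b' \<longrightarrow> hcod C (src2 C a) = hdom C (src2 C b) \<longrightarrow>
        vcomp C (hcomp C b' a') (hcomp C b a) = hcomp C (vcomp C b' b) (vcomp C a' a))"

record ('o,'m,'c,'p,'n,'d) twofun =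
  Fo :: "'o \<Rightarrow> 'p"
  Fm :: "'m \<Rightarrow> 'n"
  Fc :: "'c \<Rightarrow> 'd"

definition is_2functor ::
  "('o,'m,'c) twocat \<Rightarrow> ('p,'n,'d) twocat \<Rightarrow> ('o,'m,'c,'p,'n,'d) twofun \<Rightarrow> bool" where
  "is_2functor A B F \<longleftrightarrow>
     (\<forall>x\<in>Ob A. Fo F x \<in> Ob B \<and> Fm F (idm A x) = idm B (Fo F x))
   \<and> (\<forall>f\<in>Hom A. Fm F f \<in> Hom B \<and> hdom B (Fm F f) = Fo F (hdom A f)
        \<and> hcod B (Fm F f) = Fo F (hcod A f) \<and> Fc F (id2 A f) = id2 B (Fm F f))
   \<and> (\<forall>f\<in>Hom A. \<forall>g\<in>Hom A. hcod A f = hdom A g \<longrightarrow> Fm F (comp A g f) = comp B (Fm F g) (Fm F f))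
   \<and> (\<forall>a\<in>Cell A. Fc F a \<in> Cell B \<and> src2 B (Fc F a) = Fm F (src2 A a)
        \<and> tgt2 B (Fc F a) = Fm F (tgt2 A a))
   \<and> (\<forall>a\<in>Cell A. \<forall>b\<in>Cell A. tgt2 A a = src2 A b \<longrightarrow>
        Fc F (vcomp A b a) = vcomp B (Fc F b) (Fc F a))
   \<and> (\<forall>a\<in>Cell A. \<forall>b\<in>Cell A. hcod A (src2 A a) = hdom A (src2 A b) \<longrightarrow>
        Fc F (hcomp A b a) = hcomp B (Fc F b) (Fc F a))"

definition invertible2 :: "('o,'m,'c) twocat \<Rightarrow> 'c \<Rightarrow> bool" where
  "invertible2 C a \<longleftrightarrow> a \<in> Cell C \<and>
     (\<exists>b\<in>Cell C. src2 C b = tgt2 C a \<and> tgt2 C b = src2 C a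
        \<and> vcomp C b a = id2 C (src2 C a) \<and> vcomp C a b = id2 C (tgt2 C a))"

definition iso2 :: "('o,'m,'c) twocat \<Rightarrow> 'c \<Rightarrow> 'm \<Rightarrow> 'm \<Rightarrow> bool" where
  "iso2 C a f g \<longleftrightarrow> invertible2 C a \<and> src2 C a = f \<and> tgt2 C a = g"

definition equivalence :: "('o,'m,'c) twocat \<Rightarrow> 'm \<Rightarrow> bool" where
  "equivalence C e \<longleftrightarrow> e \<in> Hom C \<and>
     (\<exists>e'\<in>Hom C. hdom C e' = hcod C e \<and> hcod C e' = hdom C e
        \<and> (\<exists>u. iso2 C u (idm C (hdom C e)) (comp C e' e))
        \<and> (\<exists>v. iso2 C v (comp C e e') (idm C (hcod C e))))"

definition biequivalence ::
  "('o,'m,'c) twocat \<Rightarrow> ('p,'n,'d) twocat \<Rightarrow> ('o,'m,'c,'p,'n,'d) twofun \<Rightarrow> bool" where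
  "biequivalence A B F \<longleftrightarrow>
     \<comment> \<open>essentially surjective up to equivalence on objects\<close>
     (\<forall>y\<in>Ob B. \<exists>x\<in>Ob A. \<exists>e. equivalence B e \<and> hdom B e = Fo F x \<and> hcod B e = y)
     \<comment> \<open>essentially full up to invertible 2-cell on morphisms\<close>
   \<and> (\<forall>x\<in>Ob A. \<forall>x'\<in>Ob A. \<forall>g\<in>Hom B. hdom B g = Fo F x \<longrightarrow> hcod B g = Fo F x' \<longrightarrow>
        (\<exists>f\<in>Hom A. hdom A f = x \<and> hcod A f = x' \<and> (\<exists>b. iso2 B b (Fm F f) g)))
     \<comment> \<open>fully faithful on 2-cells\<close>
   \<and> (\<forall>f\<in>Hom A. \<forall>f'\<in>Hom A. hdom A f = hdom A f' \<longrightarrow> hcod A f = hcod A f' \<longrightarrow>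
        bij_betw (Fc F) {a\<in>Cell A. src2 A a = f \<and> tgt2 A a = f'}
                        {b\<in>Cell B. src2 B b = Fm F f \<and> tgt2 B b = Fm F f'})"

definition lack_fibration ::
  "('o,'m,'c) twocat \<Rightarrow> ('p,'n,'d) twocat \<Rightarrow> ('o,'m,'c,'p,'n,'d) twofun \<Rightarrow> bool" where
  "lack_fibration A B G \<longleftrightarrow>
     (\<forall>z\<in>Ob A. \<forall>b. equivalence B b \<longrightarrow> hcod B b = Fo G z \<longrightarrow>
        (\<exists>a. equivalence A a \<and> hcod A a = z \<and> Fm G a = b))
   \<and> (\<forall>c\<in>Hom A. \<forall>\<beta>. invertible2 B \<beta> \<longrightarrow> tgt2 B \<beta> = Fm G c \<longrightarrow>
        (\<exists>\<alpha>. invertible2 A \<alpha> \<and> tgt2 A \<alpha> = c \<and> Fc G \<alpha> = \<beta>))"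

section \<open>Double categories\<close>

text \<open>Squares \<alpha> have boundaries top (horizontal), bot (horizontal), left (vertical),
 right (vertical).  sqh \<beta> \<alpha>: horizontal composite, \<alpha> to the left of \<beta>
 (right \<alpha> = left \<beta>); sqv \<beta> \<alpha>: vertical composite, \<alpha> on top of \<beta> (bot \<alpha> = top \<beta>).
 hidsq u: identity square for horizontal composition on a vertical morphism u;
 vidsq f: identity square for vertical composition on a horizontal morphism f.\<close>

record ('o,'h,'v,'s) dblcat =
  DOb :: "'o set"
  HMor :: "'h set"
  VMor :: "'v set"
  Sq :: "'s set"
  hsrc :: "'h \<Rightarrow> 'o"
  htgt :: "'h \<Rightarrow> 'o"
  hcompM :: "'h \<Rightarrow> 'h \<Rightarrow> 'h"
  hid :: "'o \<Rightarrow> 'h"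
  vsrc :: "'v \<Rightarrow> 'o"
  vtgt :: "'v \<Rightarrow> 'o"
  vcompM :: "'v \<Rightarrow> 'v \<Rightarrow> 'v"
  vid :: "'o \<Rightarrow> 'v"
  top :: "'s \<Rightarrow> 'h"
  bot :: "'s \<Rightarrow> 'h"
  lft :: "'s \<Rightarrow> 'v"
  rgt :: "'s \<Rightarrow> 'v"
  sqh :: "'s \<Rightarrow> 's \<Rightarrow> 's"
  sqv :: "'s \<Rightarrow> 's \<Rightarrow> 's"
  hidsq :: "'v \<Rightarrow> 's"
  vidsq :: "'h \<Rightarrow> 's"

record ('o,'h,'v,'s,'p,'k,'w,'t) dblfun =
  DFo :: "'o \<Rightarrow> 'p"
  DFh :: "'h \<Rightarrow> 'k"
  DFv :: "'v \<Rightarrow> 'w"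
  DFs :: "'s \<Rightarrow> 't"

subsection \<open>The underlying horizontal 2-category \<open>\<^bold>H\<close>\<close>

definition HH :: "('o,'h,'v,'s) dblcat \<Rightarrow> ('o,'h,'s) twocat" where
  "HH D = \<lparr> Ob = DOb D, Hom = HMor D,
     Cell = {a\<in>Sq D. lft D a = vid D (hsrc D (top D a)) \<and> rgt D a = vid D (htgt D (top D a))},
     hdom = hsrc D, hcod = htgt D, comp = hcompM D, idm = hid D,
     src2 = top D, tgt2 = bot D, vcomp = sqv D, hcomp = sqh D, id2 = vidsq D \<rparr>"

definition HHf :: "('o,'h,'v,'s,'p,'k,'w,'t) dblfun \<Rightarrow> ('o,'h,'s,'p,'k,'t) twofun" where
  "HHf F = \<lparr> Fo = DFo F, Fm = DFh F, Fc = DFs F \<rparr>"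

subsection \<open>The 2-category \<open>\<V>\<close> of vertical morphisms and squares\<close>

text \<open>A 2-cell from \<alpha> to \<beta> is represented as the quadruple (\<alpha>, \<sigma>0, \<sigma>1, \<beta>).\<close>

definition VV :: "('o,'h,'v,'s) dblcat \<Rightarrow> ('v,'s,'s\<times>'s\<times>'s\<times>'s) twocat" where
  "VV D = \<lparr> Ob = VMor D, Hom = Sq D,
     Cell = {(a, s0, s1, b). a \<in> Sq D \<and> b \<in> Sq D \<and> lft D a = lft D b \<and> rgt D a = rgt D b
              \<and> s0 \<in> Sq D \<and> s1 \<in> Sq D
              \<and> lft D s0 = vid D (hsrc D (top D s0)) \<and> rgt D s0 = vid D (htgt D (top D s0))
              \<and> lft D s1 = vid D (hsrc D (top D s1)) \<and> rgt D s1 = vid D (htgt D (top D s1))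
              \<and> top D s0 = top D a \<and> bot D s0 = top D b
              \<and> top D s1 = bot D a \<and> bot D s1 = bot D b
              \<and> sqv D b s0 = sqv D s1 a},
     hdom = lft D, hcod = rgt D, comp = sqh D, idm = hidsq D,
     src2 = (\<lambda>(a, s0, s1, b). a), tgt2 = (\<lambda>(a, s0, s1, b). b),
     vcomp = (\<lambda>(b, t0, t1, c) (a, s0, s1, b'). (a, sqv D t0 s0, sqv D t1 s1, c)),
     hcomp = (\<lambda>(b, t0, t1, b') (a, s0, s1, a'). (sqh D b a, sqh D t0 s0, sqh D t1 s1, sqh D b' a')),
     id2 = (\<lambda>a. (a, vidsq D (top D a), vidsq D (bot D a), a)) \<rparr>"

definition VVf :: "('o,'h,'v,'s,'p,'k,'w,'t) dblfun
                    \<Rightarrow> ('v,'s,'s\<times>'s\<times>'s\<times>'s,'w,'t,'t\<times>'t\<times>'t\<times>'t) twofun" where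
  "VVf F = \<lparr> Fo = DFv F, Fm = DFs F,
     Fc = (\<lambda>(a, s0, s1, b). (DFs F a, DFs F s0, DFs F s1, DFs F b)) \<rparr>"

definition double_biequivalence ::
  "('o,'h,'v,'s) dblcat \<Rightarrow> ('p,'k,'w,'t) dblcat \<Rightarrow> ('o,'h,'v,'s,'p,'k,'w,'t) dblfun \<Rightarrow> bool" where
  "double_biequivalence A B F \<longleftrightarrow>
     biequivalence (HH A) (HH B) (HHf F) \<and> biequivalence (VV A) (VV B) (VVf F)"

definition double_fibration ::
  "('o,'h,'v,'s) dblcat \<Rightarrow> ('p,'k,'w,'t) dblcat \<Rightarrow> ('o,'h,'v,'s,'p,'k,'w,'t) dblfun \<Rightarrow> bool" where
  "double_fibration A B F \<longleftrightarrow>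
     lack_fibration (HH A) (HH B) (HHf F) \<and> lack_fibration (VV A) (VV B) (VVf F)"

section \<open>The functor \<open>\<bbbH>\<close> : 2Cat \<rightarrow> DblCat\<close>

text \<open>Vertical morphisms of \<open>\<bbbH>\<close>A are only identities; the identity at x is represented by x.\<close>

definition HD :: "('o,'m,'c) twocat \<Rightarrow> ('o,'m,'o,'c) dblcat" where
  "HD A = \<lparr> DOb = Ob A, HMor = Hom A, VMor = Ob A, Sq = Cell A,
     hsrc = hdom A, htgt = hcod A, hcompM = comp A, hid = idm A,
     vsrc = (\<lambda>x. x), vtgt = (\<lambda>x. x), vcompM = (\<lambda>y x. x), vid = (\<lambda>x. x),
     top = src2 A, bot = tgt2 A,
     lft = (\<lambda>a. hdom A (src2 A a)), rgt = (\<lambda>a. hcod A (src2 A a)),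
     sqh = hcomp A, sqv = vcomp A,
     hidsq = (\<lambda>x. id2 A (idm A x)), vidsq = id2 A \<rparr>"

definition HDf :: "('o,'m,'c,'p,'n,'d) twofun \<Rightarrow> ('o,'m,'o,'c,'p,'n,'p,'d) dblfun" where
  "HDf F = \<lparr> DFo = Fo F, DFh = Fm F, DFv = Fo F, DFs = Fc F \<rparr>"

end

theory Submission
  imports Defs
begin

definition inv2 :: "('o,'m,'c) twocat \<Rightarrow> 'c \<Rightarrow> 'c" where
  "inv2 C a = (SOME b. b \<in> Cell C \<and> src2 C b = tgt2 C a \<and> tgt2 C b = src2 C a
        \<and> vcomp C b a = id2 C (src2 C a) \<and> vcomp C a b = id2 C (tgt2 C a))"

locale tc = fixes C :: "('o,'m,'c) twocat" assumes ax: "is_2cat C"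
begin

lemmas a1 = ax[unfolded is_2cat_def, THEN conjunct1]
lemmas a2 = ax[unfolded is_2cat_def, THEN conjunct2, THEN conjunct1]
lemmas a3 = ax[unfolded is_2cat_def, THEN conjunct2, THEN conjunct2, THEN conjunct1]
lemmas a4 = ax[unfolded is_2cat_def, THEN conjunct2, THEN conjunct2, THEN conjunct2, THEN conjunct1]
lemmas a5 = ax[unfolded is_2cat_def, THEN conjunct2, THEN conjunct2, THEN conjunct2, THEN conjunct2, THEN conjunct1]
lemmas a6 = ax[unfolded is_2cat_def, THEN conjunct2, THEN conjunct2, THEN conjunct2, THEN conjunct2, THEN conjunct2, THEN conjunct1]
lemmas a7 = ax[unfolded is_2cat_def, THEN conjunct2, THEN conjunct2, THEN conjunct2, THEN conjunct2, THEN conjunct2, THEN conjunct2, THEN conjunct1]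
lemmas a8 = ax[unfolded is_2cat_def, THEN conjunct2, THEN conjunct2, THEN conjunct2, THEN conjunct2, THEN conjunct2, THEN conjunct2, THEN conjunct2, THEN conjunct1]
lemmas a9 = ax[unfolded is_2cat_def, THEN conjunct2, THEN conjunct2, THEN conjunct2, THEN conjunct2, THEN conjunct2, THEN conjunct2, THEN conjunct2, THEN conjunct2, THEN conjunct1]
lemmas a10 = ax[unfolded is_2cat_def, THEN conjunct2, THEN conjunct2, THEN conjunct2, THEN conjunct2, THEN conjunct2, THEN conjunct2, THEN conjunct2, THEN conjunct2, THEN conjunct2, THEN conjunct1]
lemmas a11 = ax[unfolded is_2cat_def, THEN conjunct2, THEN conjunct2, THEN conjunct2, THEN conjunct2, THEN conjunct2, THEN conjunct2, THEN conjunct2, THEN conjunct2, THEN conjunct2, THEN conjunct2, THEN conjunct1]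
lemmas a12 = ax[unfolded is_2cat_def, THEN conjunct2, THEN conjunct2, THEN conjunct2, THEN conjunct2, THEN conjunct2, THEN conjunct2, THEN conjunct2, THEN conjunct2, THEN conjunct2, THEN conjunct2, THEN conjunct2, THEN conjunct1]
lemmas a13 = ax[unfolded is_2cat_def, THEN conjunct2, THEN conjunct2, THEN conjunct2, THEN conjunct2, THEN conjunct2, THEN conjunct2, THEN conjunct2, THEN conjunct2, THEN conjunct2, THEN conjunct2, THEN conjunct2, THEN conjunct2, THEN conjunct1]
lemmas a14 = ax[unfolded is_2cat_def, THEN conjunct2, THEN conjunct2, THEN conjunct2, THEN conjunct2, THEN conjunct2, THEN conjunct2, THEN conjunct2, THEN conjunct2, THEN conjunct2, THEN conjunct2, THEN conjunct2, THEN conjunct2, THEN conjunct2, THEN conjunct1]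
lemmas a15 = ax[unfolded is_2cat_def, THEN conjunct2, THEN conjunct2, THEN conjunct2, THEN conjunct2, THEN conjunct2, THEN conjunct2, THEN conjunct2, THEN conjunct2, THEN conjunct2, THEN conjunct2, THEN conjunct2, THEN conjunct2, THEN conjunct2, THEN conjunct2]

lemma Ob_hdom[simp]: "f \<in> Hom C \<Longrightarrow> hdom C f \<in> Ob C" using a1 by blast
lemma Ob_hcod[simp]: "f \<in> Hom C \<Longrightarrow> hcod C f \<in> Ob C" using a1 by blast
lemma idm_Hom[simp]: "x \<in> Ob C \<Longrightarrow> idm C x \<in> Hom C" using a2 by blast
lemma hdom_idm[simp]: "x \<in> Ob C \<Longrightarrow> hdom C (idm C x) = x" using a2 by blast
lemma hcod_idm[simp]: "x \<in> Ob C \<Longrightarrow> hcod C (idm C x) = x" using a2 by blast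
lemma comp_Hom[simp]: "f \<in> Hom C \<Longrightarrow> g \<in> Hom C \<Longrightarrow> hcod C f = hdom C g \<Longrightarrow> comp C g f \<in> Hom C"
  using a3 by blast
lemma hdom_comp[simp]: "f \<in> Hom C \<Longrightarrow> g \<in> Hom C \<Longrightarrow> hcod C f = hdom C g \<Longrightarrow> hdom C (comp C g f) = hdom C f"
  using a3 by blast
lemma hcod_comp[simp]: "f \<in> Hom C \<Longrightarrow> g \<in> Hom C \<Longrightarrow> hcod C f = hdom C g \<Longrightarrow> hcod C (comp C g f) = hcod C g"
  using a3 by blast
lemma comp_idl[simp]: "f \<in> Hom C \<Longrightarrow> hcod C f = x \<Longrightarrow> comp C (idm C x) f = f"
  using a5 by blast
lemma comp_idr[simp]: "f \<in> Hom C \<Longrightarrow> hdom C f = x \<Longrightarrow> comp C f (idm C x) = f"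
  using a5 by blast
lemma src_Hom[simp]: "a \<in> Cell C \<Longrightarrow> src2 C a \<in> Hom C" using a6 by blast
lemma tgt_Hom[simp]: "a \<in> Cell C \<Longrightarrow> tgt2 C a \<in> Hom C" using a6 by blast
lemma hdom_tgt[simp]: "a \<in> Cell C \<Longrightarrow> hdom C (tgt2 C a) = hdom C (src2 C a)" using a6 by metis
lemma hcod_tgt[simp]: "a \<in> Cell C \<Longrightarrow> hcod C (tgt2 C a) = hcod C (src2 C a)" using a6 by metis
lemma id2_Cell[simp]: "f \<in> Hom C \<Longrightarrow> id2 C f \<in> Cell C" using a7 by blast
lemma src_id2[simp]: "f \<in> Hom C \<Longrightarrow> src2 C (id2 C f) = f" using a7 by blast
lemma tgt_id2[simp]: "f \<in> Hom C \<Longrightarrow> tgt2 C (id2 C f) = f" using a7 by blast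
lemma vcomp_Cell[simp]: "a \<in> Cell C \<Longrightarrow> b \<in> Cell C \<Longrightarrow> tgt2 C a = src2 C b \<Longrightarrow> vcomp C b a \<in> Cell C"
  using a8 by blast
lemma src_vcomp[simp]: "a \<in> Cell C \<Longrightarrow> b \<in> Cell C \<Longrightarrow> tgt2 C a = src2 C b \<Longrightarrow> src2 C (vcomp C b a) = src2 C a"
  using a8 by blast
lemma tgt_vcomp[simp]: "a \<in> Cell C \<Longrightarrow> b \<in> Cell C \<Longrightarrow> tgt2 C a = src2 C b \<Longrightarrow> tgt2 C (vcomp C b a) = tgt2 C b"
  using a8 by blast
lemma vcomp_assoc: "a \<in> Cell C \<Longrightarrow> b \<in> Cell C \<Longrightarrow> c \<in> Cell C \<Longrightarrow> tgt2 C a = src2 C b \<Longrightarrow> tgt2 C b = src2 C c \<Longrightarrow>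
        vcomp C c (vcomp C b a) = vcomp C (vcomp C c b) a"
  using a9 by blast
lemma vcomp_idl[simp]: "a \<in> Cell C \<Longrightarrow> tgt2 C a = f \<Longrightarrow> vcomp C (id2 C f) a = a"
  using a10 by blast
lemma vcomp_idr[simp]: "a \<in> Cell C \<Longrightarrow> src2 C a = f \<Longrightarrow> vcomp C a (id2 C f) = a"
  using a10 by blast
lemma hcomp_Cell[simp]: "a \<in> Cell C \<Longrightarrow> b \<in> Cell C \<Longrightarrow> hcod C (src2 C a) = hdom C (src2 C b) \<Longrightarrow> hcomp C b a \<in> Cell C"
  using a11 by blast
lemma src_hcomp[simp]: "a \<in> Cell C \<Longrightarrow> b \<in> Cell C \<Longrightarrow> hcod C (src2 C a) = hdom C (src2 C b) \<Longrightarrow>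
   src2 C (hcomp C b a) = comp C (src2 C b) (src2 C a)"
  using a11 by blast
lemma tgt_hcomp[simp]: "a \<in> Cell C \<Longrightarrow> b \<in> Cell C \<Longrightarrow> hcod C (src2 C a) = hdom C (src2 C b) \<Longrightarrow>
   tgt2 C (hcomp C b a) = comp C (tgt2 C b) (tgt2 C a)"
  using a11 by blast
lemma hcomp_assoc: "a \<in> Cell C \<Longrightarrow> b \<in> Cell C \<Longrightarrow> c \<in> Cell C \<Longrightarrow> hcod C (src2 C a) = hdom C (src2 C b) \<Longrightarrow>
        hcod C (src2 C b) = hdom C (src2 C c) \<Longrightarrow>
        hcomp C c (hcomp C b a) = hcomp C (hcomp C c b) a"
  using a12 by blast
lemma hcomp_idl[simp]: "a \<in> Cell C \<Longrightarrow> hcod C (src2 C a) = x \<Longrightarrow> hcomp C (id2 C (idm C x)) a = a"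
  using a13 by blast
lemma hcomp_idr[simp]: "a \<in> Cell C \<Longrightarrow> hdom C (src2 C a) = x \<Longrightarrow> hcomp C a (id2 C (idm C x)) = a"
  using a13 by blast
lemma hcomp_id2[simp]: "f \<in> Hom C \<Longrightarrow> g \<in> Hom C \<Longrightarrow> hcod C f = hdom C g \<Longrightarrow>
        hcomp C (id2 C g) (id2 C f) = id2 C (comp C g f)"
  using a14 by blast
lemma interchange: "a \<in> Cell C \<Longrightarrow> a' \<in> Cell C \<Longrightarrow> b \<in> Cell C \<Longrightarrow> b' \<in> Cell C \<Longrightarrow>
        tgt2 C a = src2 C a' \<Longrightarrow> tgt2 C b = src2 C b' \<Longrightarrow> hcod C (src2 C a) = hdom C (src2 C b) \<Longrightarrow>
        vcomp C (hcomp C b' a') (hcomp C b a) = hcomp C (vcomp C b' b) (vcomp C a' a)"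
  using a15 by blast

lemma inv_props:
  assumes "invertible2 C a"
  shows "inv2 C a \<in> Cell C \<and> src2 C (inv2 C a) = tgt2 C a \<and> tgt2 C (inv2 C a) = src2 C a
        \<and> vcomp C (inv2 C a) a = id2 C (src2 C a) \<and> vcomp C a (inv2 C a) = id2 C (tgt2 C a)"
proof -
  from assms obtain b where "b \<in> Cell C \<and> src2 C b = tgt2 C a \<and> tgt2 C b = src2 C a
        \<and> vcomp C b a = id2 C (src2 C a) \<and> vcomp C a b = id2 C (tgt2 C a)"
    unfolding invertible2_def by blast
  then show ?thesis unfolding inv2_def by (rule someI)
qed

lemma inv_Cell[simp]: "invertible2 C a \<Longrightarrow> inv2 C a \<in> Cell C" using inv_props by blast
lemma src_inv[simp]: "invertible2 C a \<Longrightarrow> src2 C (inv2 C a) = tgt2 C a" using inv_props by blast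
lemma tgt_inv[simp]: "invertible2 C a \<Longrightarrow> tgt2 C (inv2 C a) = src2 C a" using inv_props by blast
lemma inv_l[simp]: "invertible2 C a \<Longrightarrow> vcomp C (inv2 C a) a = id2 C (src2 C a)" using inv_props by blast
lemma inv_r[simp]: "invertible2 C a \<Longrightarrow> vcomp C a (inv2 C a) = id2 C (tgt2 C a)" using inv_props by blast
lemma inv_Cell'[simp]: "invertible2 C a \<Longrightarrow> a \<in> Cell C" unfolding invertible2_def by blast

lemma invI: "a \<in> Cell C \<Longrightarrow> b \<in> Cell C \<Longrightarrow> src2 C b = tgt2 C a \<Longrightarrow> tgt2 C b = src2 C a \<Longrightarrow>
   vcomp C b a = id2 C (src2 C a) \<Longrightarrow> vcomp C a b = id2 C (tgt2 C a) \<Longrightarrow> invertible2 C a"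
  unfolding invertible2_def by blast

lemma inv_unique:
  assumes a: "invertible2 C a" and b: "b \<in> Cell C" "src2 C b = tgt2 C a" "vcomp C b a = id2 C (src2 C a)"
  shows "b = inv2 C a"
proof -
  have "b = vcomp C b (vcomp C a (inv2 C a))" using a b by simp
  also have "\<dots> = vcomp C (vcomp C b a) (inv2 C a)" by (rule vcomp_assoc) (use a b in auto)
  also have "\<dots> = inv2 C a" using a b by simp
  finally show ?thesis .
qed

lemma invertible_inv[simp]: "invertible2 C a \<Longrightarrow> invertible2 C (inv2 C a)"
  by (rule invI[where b=a]) auto

lemma inv_inv[simp]: "invertible2 C a \<Longrightarrow> inv2 C (inv2 C a) = a"
  by (rule inv_unique[symmetric]) auto

lemma invertible_id2[simp]: "f \<in> Hom C \<Longrightarrow> invertible2 C (id2 C f)"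
  by (rule invI[where b="id2 C f"]) auto

lemma vassoc4:
  "a \<in> Cell C \<Longrightarrow> b \<in> Cell C \<Longrightarrow> c \<in> Cell C \<Longrightarrow> d \<in> Cell C \<Longrightarrow> tgt2 C a = src2 C b \<Longrightarrow>
   tgt2 C b = src2 C c \<Longrightarrow> tgt2 C c = src2 C d \<Longrightarrow>
   vcomp C (vcomp C d c) (vcomp C b a) = vcomp C d (vcomp C (vcomp C c b) a)"
  by (simp add: vcomp_assoc)

lemma invertible_vcomp[simp]:
  assumes a: "invertible2 C a" and b: "invertible2 C b" and e: "tgt2 C a = src2 C b"
  shows "invertible2 C (vcomp C b a)"
proof (rule invI[where b="vcomp C (inv2 C a) (inv2 C b)"])
  have "vcomp C (vcomp C (inv2 C a) (inv2 C b)) (vcomp C b a)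
      = vcomp C (inv2 C a) (vcomp C (vcomp C (inv2 C b) b) a)"
    by (rule vassoc4) (use a b e in auto)
  also have "\<dots> = id2 C (src2 C a)" using a b e by simp
  finally show "vcomp C (vcomp C (inv2 C a) (inv2 C b)) (vcomp C b a) = id2 C (src2 C (vcomp C b a))"
    using a b e by simp
  have "vcomp C (vcomp C b a) (vcomp C (inv2 C a) (inv2 C b))
      = vcomp C b (vcomp C (vcomp C a (inv2 C a)) (inv2 C b))"
    by (rule vassoc4) (use a b e in auto)
  also have "\<dots> = id2 C (tgt2 C b)" using a b e by simp
  finally show "vcomp C (vcomp C b a) (vcomp C (inv2 C a) (inv2 C b)) = id2 C (tgt2 C (vcomp C b a))"
    using a b e by simp
qed (use a b e in auto)

lemma invertible_hcomp[simp]: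
  assumes a: "invertible2 C a" and b: "invertible2 C b" and e: "hcod C (src2 C a) = hdom C (src2 C b)"
  shows "invertible2 C (hcomp C b a)"
proof (rule invI[where b="hcomp C (inv2 C b) (inv2 C a)"])
  have e2: "hcod C (tgt2 C a) = hdom C (tgt2 C b)" using a b e by simp
  show "vcomp C (hcomp C (inv2 C b) (inv2 C a)) (hcomp C b a) = id2 C (src2 C (hcomp C b a))"
    using a b e by (simp add: interchange)
  show "vcomp C (hcomp C b a) (hcomp C (inv2 C b) (inv2 C a)) = id2 C (tgt2 C (hcomp C b a))"
    using a b e e2 by (subst interchange) auto
qed (use a b e in auto)

end

lemma VV_HD_simps:
  "Ob (VV (HD C)) = Ob C" "Hom (VV (HD C)) = Cell C"
  "hdom (VV (HD C)) = (\<lambda>a. hdom C (src2 C a))" "hcod (VV (HD C)) = (\<lambda>a. hcod C (src2 C a))"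
  "comp (VV (HD C)) = hcomp C" "idm (VV (HD C)) = (\<lambda>x. id2 C (idm C x))"
  "src2 (VV (HD C)) = (\<lambda>(a, s0, s1, b). a)" "tgt2 (VV (HD C)) = (\<lambda>(a, s0, s1, b). b)"
  "vcomp (VV (HD C)) = (\<lambda>(b, t0, t1, c) (a, s0, s1, b'). (a, vcomp C t0 s0, vcomp C t1 s1, c))"
  "hcomp (VV (HD C)) = (\<lambda>(b, t0, t1, b') (a, s0, s1, a'). (hcomp C b a, hcomp C t0 s0, hcomp C t1 s1, hcomp C b' a'))"
  "id2 (VV (HD C)) = (\<lambda>a. (a, id2 C (src2 C a), id2 C (tgt2 C a), a))"
  by (simp_all add: VV_def HD_def)

lemma VV_HD_Cell:
  "(a, s0, s1, b) \<in> Cell (VV (HD C)) \<longleftrightarrow>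
     a \<in> Cell C \<and> b \<in> Cell C \<and> hdom C (src2 C a) = hdom C (src2 C b) \<and> hcod C (src2 C a) = hcod C (src2 C b)
     \<and> s0 \<in> Cell C \<and> s1 \<in> Cell C \<and> src2 C s0 = src2 C a \<and> tgt2 C s0 = src2 C b
     \<and> src2 C s1 = tgt2 C a \<and> tgt2 C s1 = tgt2 C b \<and> vcomp C b s0 = vcomp C s1 a"
  by (auto simp add: VV_def HD_def)

lemma VVf_HDf_simps:
  "Fo (VVf (HDf F)) = Fo F" "Fm (VVf (HDf F)) = Fc F"
  "Fc (VVf (HDf F)) = (\<lambda>(a, s0, s1, b). (Fc F a, Fc F s0, Fc F s1, Fc F b))"
  by (simp_all add: VVf_def HDf_def)

lemma HH_HD[simp]: "HH (HD A) = A" by (simp add: HH_def HD_def)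
lemma HHf_HDf[simp]: "HHf (HDf F) = F" by (simp add: HHf_def HDf_def)

context tc begin

lemma VV_inv:
  assumes c: "c \<in> Cell C" and a: "a \<in> Cell C" and s0: "invertible2 C s0" and s1: "invertible2 C s1"
    and e: "src2 C s0 = src2 C c" "tgt2 C s0 = src2 C a" "src2 C s1 = tgt2 C c" "tgt2 C s1 = tgt2 C a"
    and eq: "vcomp C a s0 = vcomp C s1 c"
  shows "invertible2 (VV (HD C)) (c, s0, s1, a)"
proof -
  have d: "hdom C (src2 C c) = hdom C (src2 C a)" "hcod C (src2 C c) = hcod C (src2 C a)"
    using s0 e by (metis inv_Cell' hdom_tgt hcod_tgt)+
  have eq2: "vcomp C c (inv2 C s0) = vcomp C (inv2 C s1) a"
  proof -
    have "vcomp C (inv2 C s1) a = vcomp C (inv2 C s1) (vcomp C a (vcomp C s0 (inv2 C s0)))"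
      using s0 s1 a e by simp
    also have "\<dots> = vcomp C (inv2 C s1) (vcomp C (vcomp C a s0) (inv2 C s0))"
      by (subst vcomp_assoc[of "inv2 C s0" s0 a]) (use s0 s1 a e in auto)
    also have "\<dots> = vcomp C (vcomp C (inv2 C s1) (vcomp C a s0)) (inv2 C s0)"
      by (rule vcomp_assoc) (use s0 s1 a e in auto)
    also have "\<dots> = vcomp C (vcomp C (inv2 C s1) (vcomp C s1 c)) (inv2 C s0)"
      by (simp only: eq)
    also have "\<dots> = vcomp C (vcomp C (vcomp C (inv2 C s1) s1) c) (inv2 C s0)"
      using s0 s1 a c e by (simp add: vcomp_assoc)
    also have "\<dots> = vcomp C c (inv2 C s0)" using s0 s1 a c e by simp
    finally show ?thesis by simp
  qed
  show ?thesis unfolding invertible2_def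
    apply (rule conjI)
     apply (simp add: VV_HD_Cell c a d s0 s1 e eq)
    apply (rule bexI[where x="(a, inv2 C s0, inv2 C s1, c)"])
     apply (simp add: VV_HD_simps e s0 s1)
    apply (simp add: VV_HD_Cell c a d s0 s1 e eq2)
    done
qed

lemma VV_inv_D:
  assumes "invertible2 (VV (HD C)) (c, s0, s1, a)"
  shows "invertible2 C s0" "invertible2 C s1" "(c, s0, s1, a) \<in> Cell (VV (HD C))"
proof -
  from assms obtain q where q: "q \<in> Cell (VV (HD C))" "src2 (VV (HD C)) q = a" "tgt2 (VV (HD C)) q = c"
    "vcomp (VV (HD C)) q (c, s0, s1, a) = id2 (VV (HD C)) c"
    "vcomp (VV (HD C)) (c, s0, s1, a) q = id2 (VV (HD C)) a"
    and m: "(c, s0, s1, a) \<in> Cell (VV (HD C))"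
    unfolding invertible2_def by (auto simp: VV_HD_simps)
  obtain r0 r1 where qq: "q = (a, r0, r1, c)" using q(2,3) by (cases q) (auto simp: VV_HD_simps)
  show "invertible2 C s0" using q m unfolding qq
    by (auto simp: VV_HD_simps VV_HD_Cell intro!: invI[where b=r0])
  show "invertible2 C s1" using q m unfolding qq
    by (auto simp: VV_HD_simps VV_HD_Cell intro!: invI[where b=r1])
  show "(c, s0, s1, a) \<in> Cell (VV (HD C))" by (rule m)
qed

end


definition has_linv :: "('o,'m,'c) twocat \<Rightarrow> 'c \<Rightarrow> bool" where
  "has_linv C a \<longleftrightarrow> (\<exists>l\<in>Cell C. src2 C l = tgt2 C a \<and> vcomp C l a = id2 C (src2 C a))"
definition has_rinv :: "('o,'m,'c) twocat \<Rightarrow> 'c \<Rightarrow> bool" where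
  "has_rinv C a \<longleftrightarrow> (\<exists>r\<in>Cell C. tgt2 C r = src2 C a \<and> vcomp C a r = id2 C (tgt2 C a))"

context tc begin

lemma tgt_from_eq: "a \<in> Cell C \<Longrightarrow> l \<in> Cell C \<Longrightarrow> src2 C l = tgt2 C a \<Longrightarrow> vcomp C l a = id2 C (src2 C a) \<Longrightarrow> tgt2 C l = src2 C a"
  by (metis tgt_vcomp tgt_id2 src_Hom)
lemma src_from_eq: "a \<in> Cell C \<Longrightarrow> r \<in> Cell C \<Longrightarrow> tgt2 C r = src2 C a \<Longrightarrow> vcomp C a r = id2 C (tgt2 C a) \<Longrightarrow> src2 C r = tgt2 C a"
  by (metis src_vcomp src_id2 tgt_Hom)

lemma LR_inv:
  assumes a: "a \<in> Cell C" and "has_linv C a" "has_rinv C a"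
  shows "invertible2 C a"
proof -
  obtain l where l: "l \<in> Cell C" "src2 C l = tgt2 C a" "vcomp C l a = id2 C (src2 C a)"
    using assms unfolding has_linv_def by blast
  obtain r where r: "r \<in> Cell C" "tgt2 C r = src2 C a" "vcomp C a r = id2 C (tgt2 C a)"
    using assms unfolding has_rinv_def by blast
  have tl: "tgt2 C l = src2 C a"
  by (rule tgt_from_eq) (use l a in auto)
  have sr: "src2 C r = tgt2 C a"
  by (rule src_from_eq) (use a r in auto)
  have "l = vcomp C l (vcomp C a r)" using l r a sr by simp
  also have "\<dots> = vcomp C (vcomp C l a) r" by (rule vcomp_assoc) (use l r a sr in auto)
  also have "\<dots> = r" using l r a by simp
  finally have lr: "l = r" .
  show ?thesis by (rule invI[where b=l]) (use a l r lr tl in auto)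
qed

lemma inv_LR: "invertible2 C a \<Longrightarrow> has_linv C a \<and> has_rinv C a"
  unfolding has_linv_def has_rinv_def by (auto intro!: bexI[where x="inv2 C a"])

lemma linv_vcomp:
  assumes a: "a \<in> Cell C" and c: "c \<in> Cell C" and e: "tgt2 C a = src2 C c"
    and la: "has_linv C a" and lc: "has_linv C c"
  shows "has_linv C (vcomp C c a)"
proof -
  obtain l where l: "l \<in> Cell C" "src2 C l = tgt2 C a" "vcomp C l a = id2 C (src2 C a)"
    using la unfolding has_linv_def by blast
  obtain m where m: "m \<in> Cell C" "src2 C m = tgt2 C c" "vcomp C m c = id2 C (src2 C c)"
    using lc unfolding has_linv_def by blast
  have tm: "tgt2 C m = src2 C c"
  by (rule tgt_from_eq) (use m c in auto)
  have "vcomp C (vcomp C l m) (vcomp C c a) = vcomp C l (vcomp C (vcomp C m c) a)"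
    by (rule vassoc4) (use a c e l m tm in auto)
  also have "\<dots> = id2 C (src2 C a)" using a c e l m by simp
  finally show ?thesis unfolding has_linv_def
    by (intro bexI[where x="vcomp C l m"]) (use a c e l m tm in auto)
qed

lemma rinv_vcomp:
  assumes a: "a \<in> Cell C" and c: "c \<in> Cell C" and e: "tgt2 C a = src2 C c"
    and la: "has_rinv C a" and lc: "has_rinv C c"
  shows "has_rinv C (vcomp C c a)"
proof -
  obtain l where l: "l \<in> Cell C" "tgt2 C l = src2 C a" "vcomp C a l = id2 C (tgt2 C a)"
    using la unfolding has_rinv_def by blast
  obtain m where m: "m \<in> Cell C" "tgt2 C m = src2 C c" "vcomp C c m = id2 C (tgt2 C c)"
    using lc unfolding has_rinv_def by blast
  have sm: "src2 C m = tgt2 C c"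
  by (rule src_from_eq) (use c m in auto)
  have sl: "src2 C l = tgt2 C a"
  by (rule src_from_eq) (use a l in auto)
  have "vcomp C (vcomp C c a) (vcomp C l m) = vcomp C c (vcomp C (vcomp C a l) m)"
    by (rule vassoc4) (use a c e l m sm sl in auto)
  also have "\<dots> = id2 C (tgt2 C c)" using a c e l m sm by simp
  finally show ?thesis unfolding has_rinv_def
    by (intro bexI[where x="vcomp C l m"]) (use a c e l m sm sl in auto)
qed

lemma linv_whisk:
  assumes a: "a \<in> Cell C" and k: "k \<in> Hom C" and e: "hcod C (src2 C a) = hdom C k" and la: "has_linv C a"
  shows "has_linv C (hcomp C (id2 C k) a)"
proof -
  obtain l where l: "l \<in> Cell C" "src2 C l = tgt2 C a" "vcomp C l a = id2 C (src2 C a)"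
    using la unfolding has_linv_def by blast
  have "vcomp C (hcomp C (id2 C k) l) (hcomp C (id2 C k) a) = hcomp C (vcomp C (id2 C k) (id2 C k)) (vcomp C l a)"
    by (rule interchange) (use a k e l in auto)
  also have "\<dots> = id2 C (comp C k (src2 C a))" using a k e l by simp
  finally show ?thesis unfolding has_linv_def
    by (intro bexI[where x="hcomp C (id2 C k) l"]) (use a k e l in auto)
qed

lemma rinv_whisk:
  assumes a: "a \<in> Cell C" and k: "k \<in> Hom C" and e: "hcod C (src2 C a) = hdom C k" and la: "has_rinv C a"
  shows "has_rinv C (hcomp C (id2 C k) a)"
proof -
  obtain l where l: "l \<in> Cell C" "tgt2 C l = src2 C a" "vcomp C a l = id2 C (tgt2 C a)"
    using la unfolding has_rinv_def by blast
  have sl: "src2 C l = tgt2 C a"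
  by (rule src_from_eq) (use a l in auto)
  have "vcomp C (hcomp C (id2 C k) a) (hcomp C (id2 C k) l) = hcomp C (vcomp C (id2 C k) (id2 C k)) (vcomp C a l)"
    by (rule interchange) (use a k e l sl in auto)
  also have "\<dots> = id2 C (comp C k (tgt2 C a))" using a k e l sl by simp
  finally show ?thesis unfolding has_rinv_def
    by (intro bexI[where x="hcomp C (id2 C k) l"]) (use a k e l sl in auto)
qed

lemma LR_of_vcomp:
  assumes a: "a \<in> Cell C" and c: "c \<in> Cell C" and e: "tgt2 C a = src2 C c" and i: "invertible2 C (vcomp C c a)"
  shows "has_linv C a" "has_rinv C c"
proof -
  let ?x = "vcomp C c a"
  have "vcomp C (vcomp C (inv2 C ?x) c) a = vcomp C (inv2 C ?x) ?x"
    by (rule vcomp_assoc[symmetric]) (use a c e i in auto)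
  also have "\<dots> = id2 C (src2 C a)" using a c e i by simp
  finally show "has_linv C a" unfolding has_linv_def
    by (intro bexI[where x="vcomp C (inv2 C ?x) c"]) (use a c e i in auto)
  have "vcomp C c (vcomp C a (inv2 C ?x)) = vcomp C ?x (inv2 C ?x)"
    by (rule vcomp_assoc) (use a c e i in auto)
  also have "\<dots> = id2 C (tgt2 C c)" using a c e i by simp
  finally show "has_rinv C c" unfolding has_rinv_def
    by (intro bexI[where x="vcomp C a (inv2 C ?x)"]) (use a c e i in auto)
qed

lemma whisk_comp:
  assumes b: "b \<in> Cell C" and g: "g \<in> Hom C" and h: "h \<in> Hom C" and e1: "hcod C (src2 C b) = hdom C h"
    and e2: "hcod C h = hdom C g"
  shows "hcomp C (id2 C g) (hcomp C (id2 C h) b) = hcomp C (id2 C (comp C g h)) b"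
proof -
  have "hcomp C (id2 C g) (hcomp C (id2 C h) b) = hcomp C (hcomp C (id2 C g) (id2 C h)) b"
    by (rule hcomp_assoc) (use b g h e1 e2 in auto)
  then show ?thesis using g h e2 by simp
qed

lemma reflect:
  assumes b: "b \<in> Cell C" and t: "invertible2 C t" and tt: "tgt2 C t = idm C y" and y: "y \<in> Ob C"
    and hb: "hcod C (src2 C b) = y"
  shows "has_linv C (hcomp C (id2 C (src2 C t)) b) \<Longrightarrow> has_linv C b"
    and "has_rinv C (hcomp C (id2 C (src2 C t)) b) \<Longrightarrow> has_rinv C b"
proof -
  let ?k = "src2 C t" and ?g = "src2 C b" and ?g' = "tgt2 C b"
  have tc: "t \<in> Cell C" using t by simp
  have kd: "hdom C ?k = y" "hcod C ?k = y"
    using tc tt y by (metis hdom_tgt hdom_idm hcod_tgt hcod_idm)+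
  let ?T = "hcomp C t (id2 C ?g)" and ?T' = "hcomp C t (id2 C ?g')" and ?Q = "hcomp C (id2 C ?k) b"
  have Ti: "invertible2 C ?T" "invertible2 C ?T'" using t b kd by (auto simp: hb)
  have Q: "?Q \<in> Cell C" using b kd tc by (auto simp: hb)
  have "vcomp C b ?T = vcomp C (hcomp C (id2 C (idm C y)) b) ?T" using b by (simp add: hb)
  also have "\<dots> = hcomp C (vcomp C (id2 C (idm C y)) t) (vcomp C b (id2 C ?g))"
    by (rule interchange) (use b tc tt y kd in \<open>auto simp: hb\<close>)
  also have "\<dots> = hcomp C t b" using b tc tt by simp
  also have "\<dots> = hcomp C (vcomp C t (id2 C ?k)) (vcomp C (id2 C ?g') b)" using b tc by simp
  also have "\<dots> = vcomp C ?T' ?Q"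
    by (rule interchange[symmetric]) (use b tc tt y kd in \<open>auto simp: hb\<close>)
  finally have eq: "vcomp C b ?T = vcomp C ?T' ?Q" .
  have "b = vcomp C (vcomp C b ?T) (inv2 C ?T)"
  proof -
    have "vcomp C (vcomp C b ?T) (inv2 C ?T) = vcomp C b (vcomp C ?T (inv2 C ?T))"
      by (rule vcomp_assoc[symmetric]) (use b Ti tc tt y kd in \<open>auto simp: hb\<close>)
    also have "\<dots> = b" using b Ti tc tt y kd by (simp add: hb)
    finally show ?thesis by simp
  qed
  then have bq: "b = vcomp C (vcomp C ?T' ?Q) (inv2 C ?T)" using eq by simp
  have ty: "tgt2 C ?Q = src2 C ?T'" using b tc kd by (simp add: hb)
  have ty2: "tgt2 C (inv2 C ?T) = src2 C (vcomp C ?T' ?Q)" using b tc kd Ti Q ty by (simp add: hb)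
  have IL: "has_linv C (inv2 C ?T)" "has_rinv C (inv2 C ?T)" "has_linv C ?T'" "has_rinv C ?T'"
    using Ti inv_LR invertible_inv by blast+
  show "has_linv C ?Q \<Longrightarrow> has_linv C b"
    apply (subst bq)
    apply (rule linv_vcomp)
        apply (use Ti Q ty ty2 IL in \<open>auto intro!: linv_vcomp dest: inv_LR\<close>)
    done
  show "has_rinv C ?Q \<Longrightarrow> has_rinv C b"
    apply (subst bq)
    apply (rule rinv_vcomp)
        apply (use Ti Q ty ty2 IL in \<open>auto intro!: rinv_vcomp dest: inv_LR\<close>)
    done
qed

end


context tc begin

lemma equivVV_unfold:
  "equivalence (VV (HD C)) e \<longleftrightarrow> e \<in> Cell C \<and>
     (\<exists>e'\<in>Cell C. hdom C (src2 C e') = hcod C (src2 C e) \<and> hcod C (src2 C e') = hdom C (src2 C e)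
      \<and> (\<exists>u. iso2 (VV (HD C)) u (id2 C (idm C (hdom C (src2 C e)))) (hcomp C e' e))
      \<and> (\<exists>v. iso2 (VV (HD C)) v (hcomp C e e') (id2 C (idm C (hcod C (src2 C e))))))"
  unfolding equivalence_def by (simp add: VV_HD_simps)

lemma isoVV: "iso2 (VV (HD C)) (c, s0, s1, a) x y \<longleftrightarrow> invertible2 (VV (HD C)) (c, s0, s1, a) \<and> c = x \<and> a = y"
  unfolding iso2_def by (simp add: VV_HD_simps)

lemma equiv_VV_id2:
  assumes "equivalence C g" shows "equivalence (VV (HD C)) (id2 C g)"
proof -
  from assms obtain g' \<eta> \<epsilon> where g: "g \<in> Hom C" and g': "g' \<in> Hom C" "hdom C g' = hcod C g" "hcod C g' = hdom C g"
    and \<eta>: "iso2 C \<eta> (idm C (hdom C g)) (comp C g' g)" and \<epsilon>: "iso2 C \<epsilon> (comp C g g') (idm C (hcod C g))"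
    unfolding equivalence_def by blast
  have u: "invertible2 (VV (HD C)) (id2 C (idm C (hdom C g)), \<eta>, \<eta>, id2 C (comp C g' g))"
    using \<eta> g g' by (intro VV_inv) (auto simp: iso2_def)
  have v: "invertible2 (VV (HD C)) (id2 C (comp C g g'), \<epsilon>, \<epsilon>, id2 C (idm C (hcod C g)))"
    using \<epsilon> g g' by (intro VV_inv) (auto simp: iso2_def)
  have U: "\<exists>u. iso2 (VV (HD C)) u (id2 C (idm C (hdom C (src2 C (id2 C g))))) (hcomp C (id2 C g') (id2 C g))"
    by (rule exI[where x="(id2 C (idm C (hdom C g)), \<eta>, \<eta>, id2 C (comp C g' g))"]) (simp add: isoVV u g g')
  have V: "\<exists>v. iso2 (VV (HD C)) v (hcomp C (id2 C g) (id2 C g')) (id2 C (idm C (hcod C (src2 C (id2 C g)))))"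
    by (rule exI[where x="(id2 C (comp C g g'), \<epsilon>, \<epsilon>, id2 C (idm C (hcod C g)))"]) (simp add: isoVV v g g')
  show ?thesis unfolding equivVV_unfold
    apply (rule conjI)
     apply (simp add: g)
    apply (rule bexI[where x="id2 C g'"])
     apply (intro conjI)
        apply (simp add: g g')
       apply (simp add: g g')
      apply (rule U)
     apply (rule V)
    apply (simp add: g')
    done
qed

lemma equiv_VV_inv:
  assumes f: "equivalence C f" and a: "invertible2 C a" and sa: "src2 C a = f"
  shows "equivalence (VV (HD C)) a"
proof -
  from f obtain h \<eta> \<epsilon> where fh: "f \<in> Hom C" and h: "h \<in> Hom C" "hdom C h = hcod C f" "hcod C h = hdom C f"
    and \<eta>: "iso2 C \<eta> (idm C (hdom C f)) (comp C h f)" and \<epsilon>: "iso2 C \<epsilon> (comp C f h) (idm C (hcod C f))"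
    unfolding equivalence_def by blast
  have ac: "a \<in> Cell C" using a by simp
  let ?X = "hcomp C (id2 C h) a" and ?Y = "hcomp C a (id2 C h)"
  have X: "invertible2 C ?X" "invertible2 C ?Y" using a h sa by auto
  have Xs: "src2 C ?X = comp C h f" "tgt2 C ?X = comp C h (tgt2 C a)"
    "src2 C ?Y = comp C f h" "tgt2 C ?Y = comp C (tgt2 C a) h" using ac h sa by auto
  have u: "invertible2 (VV (HD C)) (id2 C (idm C (hdom C f)), \<eta>, vcomp C ?X \<eta>, ?X)"
    using \<eta> X Xs fh h by (intro VV_inv) (auto simp: iso2_def)
  have eqv: "vcomp C (vcomp C \<epsilon> (inv2 C ?Y)) ?Y = \<epsilon>"
  proof -
    have "vcomp C (vcomp C \<epsilon> (inv2 C ?Y)) ?Y = vcomp C \<epsilon> (vcomp C (inv2 C ?Y) ?Y)"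
      by (rule vcomp_assoc[symmetric]) (use X Xs \<epsilon> in \<open>auto simp: iso2_def\<close>)
    then show ?thesis using X Xs \<epsilon> by (simp add: iso2_def)
  qed
  have v: "invertible2 (VV (HD C)) (?Y, \<epsilon>, vcomp C \<epsilon> (inv2 C ?Y), id2 C (idm C (hcod C f)))"
    using \<epsilon> X Xs fh h eqv by (intro VV_inv) (auto simp: iso2_def)
  have U: "\<exists>u. iso2 (VV (HD C)) u (id2 C (idm C (hdom C (src2 C a)))) (hcomp C (id2 C h) a)"
    by (rule exI[where x="(id2 C (idm C (hdom C f)), \<eta>, vcomp C ?X \<eta>, ?X)"]) (simp add: isoVV u sa)
  have V: "\<exists>v. iso2 (VV (HD C)) v (hcomp C a (id2 C h)) (id2 C (idm C (hcod C (src2 C a))))"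
    by (rule exI[where x="(?Y, \<epsilon>, vcomp C \<epsilon> (inv2 C ?Y), id2 C (idm C (hcod C f)))"]) (simp add: isoVV v sa)
  show ?thesis unfolding equivVV_unfold
    apply (rule conjI)
     apply (simp add: ac)
    apply (rule bexI[where x="id2 C h"])
     apply (intro conjI)
        apply (simp add: h sa)
       apply (simp add: h sa)
      apply (rule U)
     apply (rule V)
    apply (simp add: h)
    done
qed

lemma inv_from_eq:
  assumes X: "X \<in> Cell C" and s0: "invertible2 C s0" and s1: "invertible2 C s1" and e: "tgt2 C s0 = src2 C X"
    and eq: "vcomp C X s0 = s1"
  shows "invertible2 C X"
proof -
  have "X = vcomp C X (vcomp C s0 (inv2 C s0))" using X s0 e by simp
  also have "\<dots> = vcomp C (vcomp C X s0) (inv2 C s0)" by (rule vcomp_assoc) (use X s0 e in auto)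
  also have "\<dots> = vcomp C s1 (inv2 C s0)" by (simp add: eq)
  finally have "X = vcomp C s1 (inv2 C s0)" .
  moreover have "invertible2 C (vcomp C s1 (inv2 C s0))"
  proof -
    have "src2 C s1 = src2 C s0" using eq X s0 e by (metis src_vcomp inv_Cell')
    then show ?thesis using s0 s1 by simp
  qed
  ultimately show ?thesis by simp
qed

lemma key:
  assumes "equivalence (VV (HD C)) b"
  shows "invertible2 C b \<and> equivalence C (src2 C b)"
proof -
  from assms[unfolded equivVV_unfold] obtain e' u v where b: "b \<in> Cell C" and e': "e' \<in> Cell C"
    "hdom C (src2 C e') = hcod C (src2 C b)" "hcod C (src2 C e') = hdom C (src2 C b)"
    and u: "iso2 (VV (HD C)) u (id2 C (idm C (hdom C (src2 C b)))) (hcomp C e' b)"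
    and v: "iso2 (VV (HD C)) v (hcomp C b e') (id2 C (idm C (hcod C (src2 C b))))" by blast
  obtain c0 s0 s1 X where uu: "u = (c0, s0, s1, X)" by (cases u) auto
  obtain Y t0 t1 d0 where vv: "v = (Y, t0, t1, d0)" by (cases v) auto
  let ?w = "hdom C (src2 C b)" and ?y = "hcod C (src2 C b)"
  let ?g = "src2 C b" and ?g' = "tgt2 C b" and ?h = "src2 C e'" and ?h' = "tgt2 C e'"
  have ui: "invertible2 (VV (HD C)) (c0, s0, s1, X)" and c0: "c0 = id2 C (idm C ?w)" and X: "X = hcomp C e' b"
    using u uu isoVV by auto
  have vi: "invertible2 (VV (HD C)) (Y, t0, t1, d0)" and d0: "d0 = id2 C (idm C ?y)" and Y: "Y = hcomp C b e'"
    using v vv isoVV by auto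
  have s01: "invertible2 C s0" "invertible2 C s1" using VV_inv_D[OF ui] by auto
  have t01: "invertible2 C t0" "invertible2 C t1" using VV_inv_D[OF vi] by auto
  have uc: "(c0, s0, s1, X) \<in> Cell (VV (HD C))" using VV_inv_D[OF ui] by auto
  have vc: "(Y, t0, t1, d0) \<in> Cell (VV (HD C))" using VV_inv_D[OF vi] by auto
  have wy: "?w \<in> Ob C" "?y \<in> Ob C" using b by auto
  have s0b: "src2 C s0 = idm C ?w" "tgt2 C s0 = comp C ?h ?g" "vcomp C X s0 = s1" "tgt2 C s1 = comp C ?h' ?g'"
    using uc b e' wy unfolding c0 X by (auto simp: VV_HD_Cell)
  have t0b: "src2 C t0 = comp C ?g ?h" "tgt2 C t0 = idm C ?y" "src2 C t1 = comp C ?g' ?h'" "tgt2 C t1 = idm C ?y"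
    using vc b e' wy unfolding d0 Y by (auto simp: VV_HD_Cell)
  have Xc: "X \<in> Cell C" using b e' X by simp
  have Xi: "invertible2 C X" by (rule inv_from_eq[OF Xc s01]) (use s0b b e' X in auto)
  have X1: "X = vcomp C (hcomp C e' (id2 C ?g')) (hcomp C (id2 C ?h) b)"
  proof -
    have "vcomp C (hcomp C e' (id2 C ?g')) (hcomp C (id2 C ?h) b) = hcomp C (vcomp C e' (id2 C ?h)) (vcomp C (id2 C ?g') b)"
      by (rule interchange) (use b e' in auto)
    then show ?thesis using b e' X by simp
  qed
  have "has_linv C (hcomp C (id2 C ?h) b)"
    by (rule LR_of_vcomp(1)[of _ "hcomp C e' (id2 C ?g')"]) (use b e' Xi X1 in auto)
  then have "has_linv C (hcomp C (id2 C ?g) (hcomp C (id2 C ?h) b))"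
    by (rule linv_whisk[rotated 3]) (use b e' in auto)
  then have "has_linv C (hcomp C (id2 C (src2 C t0)) b)"
    using whisk_comp[of b ?g ?h] b e' t0b by simp
  then have L: "has_linv C b" by (rule reflect(1)[OF b t01(1) t0b(2) wy(2) refl])
  have X2: "X = vcomp C (hcomp C (id2 C ?h') b) (hcomp C e' (id2 C ?g))"
  proof -
    have "vcomp C (hcomp C (id2 C ?h') b) (hcomp C e' (id2 C ?g)) = hcomp C (vcomp C (id2 C ?h') e') (vcomp C b (id2 C ?g))"
      by (rule interchange) (use b e' in auto)
    then show ?thesis using b e' X by simp
  qed
  have "has_rinv C (hcomp C (id2 C ?h') b)"
    by (rule LR_of_vcomp(2)[of "hcomp C e' (id2 C ?g)"]) (use b e' Xi X2 in auto)
  then have "has_rinv C (hcomp C (id2 C ?g') (hcomp C (id2 C ?h') b))"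
    by (rule rinv_whisk[rotated 3]) (use b e' in auto)
  then have "has_rinv C (hcomp C (id2 C (src2 C t1)) b)"
    using whisk_comp[of b ?g' ?h'] b e' t0b by simp
  then have R: "has_rinv C b" by (rule reflect(2)[OF b t01(2) t0b(4) wy(2) refl])
  have eq: "equivalence C ?g"
    unfolding equivalence_def
    apply (rule conjI)
     apply (simp add: b)
    apply (rule bexI[where x="?h"])
     apply (intro conjI)
       apply (simp_all add: e' b)
     apply (rule exI[where x=s0])
     apply (simp add: iso2_def s01 s0b)
    apply (rule exI[where x=t0])
    apply (simp add: iso2_def t01 t0b)
    done
  show ?thesis using LR_inv[OF b L R] eq by simp
qed

end


locale tf = A: tc A + B: tc B for A :: "('o,'m,'c) twocat" and B :: "('p,'n,'d) twocat" +
  fixes F :: "('o,'m,'c,'p,'n,'d) twofun" assumes fn: "is_2functor A B F"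
begin
lemmas f1 = fn[unfolded is_2functor_def, THEN conjunct1]
lemmas f2 = fn[unfolded is_2functor_def, THEN conjunct2, THEN conjunct1]
lemmas f3 = fn[unfolded is_2functor_def, THEN conjunct2, THEN conjunct2, THEN conjunct1]
lemmas f4 = fn[unfolded is_2functor_def, THEN conjunct2, THEN conjunct2, THEN conjunct2, THEN conjunct1]
lemmas f5 = fn[unfolded is_2functor_def, THEN conjunct2, THEN conjunct2, THEN conjunct2, THEN conjunct2, THEN conjunct1]
lemmas f6 = fn[unfolded is_2functor_def, THEN conjunct2, THEN conjunct2, THEN conjunct2, THEN conjunct2, THEN conjunct2]

lemma F_Ob[simp]: "x \<in> Ob A \<Longrightarrow> Fo F x \<in> Ob B" using f1 by blast
lemma F_idm[simp]: "x \<in> Ob A \<Longrightarrow> Fm F (idm A x) = idm B (Fo F x)" using f1 by blast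
lemma F_Hom[simp]: "f \<in> Hom A \<Longrightarrow> Fm F f \<in> Hom B" using f2 by blast
lemma hdom_F[simp]: "f \<in> Hom A \<Longrightarrow> hdom B (Fm F f) = Fo F (hdom A f)" using f2 by blast
lemma hcod_F[simp]: "f \<in> Hom A \<Longrightarrow> hcod B (Fm F f) = Fo F (hcod A f)" using f2 by blast
lemma F_id2[simp]: "f \<in> Hom A \<Longrightarrow> Fc F (id2 A f) = id2 B (Fm F f)" using f2 by blast
lemma F_comp[simp]: "f \<in> Hom A \<Longrightarrow> g \<in> Hom A \<Longrightarrow> hcod A f = hdom A g \<Longrightarrow> Fm F (comp A g f) = comp B (Fm F g) (Fm F f)"
  using f3 by blast
lemma F_Cell[simp]: "a \<in> Cell A \<Longrightarrow> Fc F a \<in> Cell B" using f4 by blast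
lemma src_F[simp]: "a \<in> Cell A \<Longrightarrow> src2 B (Fc F a) = Fm F (src2 A a)" using f4 by blast
lemma tgt_F[simp]: "a \<in> Cell A \<Longrightarrow> tgt2 B (Fc F a) = Fm F (tgt2 A a)" using f4 by blast
lemma F_vcomp[simp]: "a \<in> Cell A \<Longrightarrow> b \<in> Cell A \<Longrightarrow> tgt2 A a = src2 A b \<Longrightarrow> Fc F (vcomp A b a) = vcomp B (Fc F b) (Fc F a)"
  using f5 by blast
lemma F_hcomp[simp]: "a \<in> Cell A \<Longrightarrow> b \<in> Cell A \<Longrightarrow> hcod A (src2 A a) = hdom A (src2 A b) \<Longrightarrow> Fc F (hcomp A b a) = hcomp B (Fc F b) (Fc F a)"
  using f6 by blast

lemma F_invertible[simp]: "invertible2 A a \<Longrightarrow> invertible2 B (Fc F a)"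
  by (rule B.invI[where b="Fc F (inv2 A a)"]) (auto simp flip: F_vcomp)

lemma F_inv[simp]: "invertible2 A a \<Longrightarrow> Fc F (inv2 A a) = inv2 B (Fc F a)"
  by (rule B.inv_unique) (auto simp flip: F_vcomp)

end


context tf begin

lemma bieq_VV:
  assumes bi: "biequivalence A B F"
  shows "biequivalence (VV (HD A)) (VV (HD B)) (VVf (HDf F))"
proof -
  have ES: "\<forall>y\<in>Ob B. \<exists>x\<in>Ob A. \<exists>e. equivalence B e \<and> hdom B e = Fo F x \<and> hcod B e = y"
    using bi[unfolded biequivalence_def] by (rule conjunct1)
  have EF: "\<forall>x\<in>Ob A. \<forall>x'\<in>Ob A. \<forall>g\<in>Hom B. hdom B g = Fo F x \<longrightarrow> hcod B g = Fo F x' \<longrightarrow>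
        (\<exists>f\<in>Hom A. hdom A f = x \<and> hcod A f = x' \<and> (\<exists>b. iso2 B b (Fm F f) g))"
    using bi[unfolded biequivalence_def] by (rule conjunct2[THEN conjunct1])
  have FF: "\<forall>f\<in>Hom A. \<forall>f'\<in>Hom A. hdom A f = hdom A f' \<longrightarrow> hcod A f = hcod A f' \<longrightarrow>
        bij_betw (Fc F) {a\<in>Cell A. src2 A a = f \<and> tgt2 A a = f'}
                        {b\<in>Cell B. src2 B b = Fm F f \<and> tgt2 B b = Fm F f'}"
    using bi[unfolded biequivalence_def] by (rule conjunct2[THEN conjunct2])
  have P1: "\<forall>y\<in>Ob B. \<exists>x\<in>Ob A. \<exists>e. equivalence (VV (HD B)) e \<and> hdom B (src2 B e) = Fo F x \<and> hcod B (src2 B e) = y"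
  proof
    fix y assume "y \<in> Ob B"
    then obtain x e where "x \<in> Ob A" "equivalence B e" "hdom B e = Fo F x" "hcod B e = y"
      using ES[rule_format, OF \<open>y \<in> Ob B\<close>] by blast
    moreover have "e \<in> Hom B" using \<open>equivalence B e\<close> unfolding equivalence_def by blast
    ultimately show "\<exists>x\<in>Ob A. \<exists>e. equivalence (VV (HD B)) e \<and> hdom B (src2 B e) = Fo F x \<and> hcod B (src2 B e) = y"
      using B.equiv_VV_id2[OF \<open>equivalence B e\<close>]
      by (intro bexI[where x=x] exI[where x="id2 B e"] conjI) simp_all
  qed
  have P2: "\<forall>x\<in>Ob A. \<forall>x'\<in>Ob A. \<forall>\<beta>\<in>Cell B. hdom B (src2 B \<beta>) = Fo F x \<longrightarrow> hcod B (src2 B \<beta>) = Fo F x' \<longrightarrow>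
        (\<exists>\<alpha>\<in>Cell A. hdom A (src2 A \<alpha>) = x \<and> hcod A (src2 A \<alpha>) = x' \<and> (\<exists>q. iso2 (VV (HD B)) q (Fc F \<alpha>) \<beta>))"
  proof (intro ballI impI)
    fix x x' \<beta> assume x: "x \<in> Ob A" "x' \<in> Ob A" and \<beta>: "\<beta> \<in> Cell B"
      and d: "hdom B (src2 B \<beta>) = Fo F x" "hcod B (src2 B \<beta>) = Fo F x'"
    obtain f \<phi> where f: "f \<in> Hom A" "hdom A f = x" "hcod A f = x'" and \<phi>: "iso2 B \<phi> (Fm F f) (src2 B \<beta>)"
      using EF[rule_format, OF x(1) x(2) B.src_Hom[OF \<beta>] d(1) d(2)] by blast
    obtain f' \<phi>' where f': "f' \<in> Hom A" "hdom A f' = x" "hcod A f' = x'" and \<phi>': "iso2 B \<phi>' (Fm F f') (tgt2 B \<beta>)"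
    proof -
      have "hdom B (tgt2 B \<beta>) = Fo F x" "hcod B (tgt2 B \<beta>) = Fo F x'" using \<beta> d by simp_all
      then show ?thesis using EF[rule_format, OF x(1) x(2) B.tgt_Hom[OF \<beta>]] that by blast
    qed
    have \<phi>i: "invertible2 B \<phi>" "src2 B \<phi> = Fm F f" "tgt2 B \<phi> = src2 B \<beta>" using \<phi> unfolding iso2_def by auto
    have \<phi>i': "invertible2 B \<phi>'" "src2 B \<phi>' = Fm F f'" "tgt2 B \<phi>' = tgt2 B \<beta>" using \<phi>' unfolding iso2_def by auto
    let ?\<gamma> = "vcomp B (inv2 B \<phi>') (vcomp B \<beta> \<phi>)"
    have \<gamma>: "?\<gamma> \<in> {b\<in>Cell B. src2 B b = Fm F f \<and> tgt2 B b = Fm F f'}" using \<phi>i \<phi>i' \<beta> by auto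
    have "bij_betw (Fc F) {a\<in>Cell A. src2 A a = f \<and> tgt2 A a = f'} {b\<in>Cell B. src2 B b = Fm F f \<and> tgt2 B b = Fm F f'}"
      using FF[rule_format, OF f(1) f'(1)] f f' by simp
    then have X: "Fc F ` {a\<in>Cell A. src2 A a = f \<and> tgt2 A a = f'} = {b\<in>Cell B. src2 B b = Fm F f \<and> tgt2 B b = Fm F f'}"
      by (rule bij_betw_imp_surj_on)
    have "?\<gamma> \<in> Fc F ` {a\<in>Cell A. src2 A a = f \<and> tgt2 A a = f'}"
      unfolding X by (rule \<gamma>)
    then obtain \<alpha> where \<alpha>S: "\<alpha> \<in> {a\<in>Cell A. src2 A a = f \<and> tgt2 A a = f'}" and \<alpha>e: "?\<gamma> = Fc F \<alpha>"
      by (rule imageE)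
    have \<alpha>: "\<alpha> \<in> Cell A" "src2 A \<alpha> = f" "tgt2 A \<alpha> = f'" using \<alpha>S by blast+
    have \<alpha>4: "Fc F \<alpha> = ?\<gamma>" using \<alpha>e by (rule sym)
    have eq: "vcomp B \<beta> \<phi> = vcomp B \<phi>' (Fc F \<alpha>)"
    proof -
      have "vcomp B \<phi>' (Fc F \<alpha>) = vcomp B (vcomp B \<phi>' (inv2 B \<phi>')) (vcomp B \<beta> \<phi>)"
        unfolding \<alpha>4 by (rule B.vcomp_assoc) (use \<phi>i \<phi>i' \<beta> in auto)
      then show ?thesis using \<phi>i \<phi>i' \<beta> by simp
    qed
    have "invertible2 (VV (HD B)) (Fc F \<alpha>, \<phi>, \<phi>', \<beta>)"
      by (rule B.VV_inv) (use \<alpha> \<beta> \<phi>i \<phi>i' eq f f' in auto)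
    then show "\<exists>\<alpha>\<in>Cell A. hdom A (src2 A \<alpha>) = x \<and> hcod A (src2 A \<alpha>) = x' \<and> (\<exists>q. iso2 (VV (HD B)) q (Fc F \<alpha>) \<beta>)"
      using \<alpha> f by (intro bexI[where x=\<alpha>] conjI exI[where x="(Fc F \<alpha>, \<phi>, \<phi>', \<beta>)"]) (simp_all add: B.isoVV)
  qed
  have P3: "\<forall>\<alpha>\<in>Cell A. \<forall>\<alpha>'\<in>Cell A. hdom A (src2 A \<alpha>) = hdom A (src2 A \<alpha>') \<longrightarrow> hcod A (src2 A \<alpha>) = hcod A (src2 A \<alpha>') \<longrightarrow>
     bij_betw (\<lambda>(a, s0, s1, b). (Fc F a, Fc F s0, Fc F s1, Fc F b))
       {q \<in> Cell (VV (HD A)). (case q of (a, s0, s1, b) \<Rightarrow> a) = \<alpha> \<and> (case q of (a, s0, s1, b) \<Rightarrow> b) = \<alpha>'}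
       {q \<in> Cell (VV (HD B)). (case q of (a, s0, s1, b) \<Rightarrow> a) = Fc F \<alpha> \<and> (case q of (a, s0, s1, b) \<Rightarrow> b) = Fc F \<alpha>'}"
  proof (intro ballI impI)
    fix \<alpha> \<alpha>' assume a: "\<alpha> \<in> Cell A" "\<alpha>' \<in> Cell A" and d: "hdom A (src2 A \<alpha>) = hdom A (src2 A \<alpha>')"
      "hcod A (src2 A \<alpha>) = hcod A (src2 A \<alpha>')"
    have b0: "bij_betw (Fc F) {a\<in>Cell A. src2 A a = src2 A \<alpha> \<and> tgt2 A a = src2 A \<alpha>'}
                        {b\<in>Cell B. src2 B b = Fm F (src2 A \<alpha>) \<and> tgt2 B b = Fm F (src2 A \<alpha>')}"
      using FF[rule_format, OF A.src_Hom[OF a(1)] A.src_Hom[OF a(2)]] a d by simp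
    have b1: "bij_betw (Fc F) {a\<in>Cell A. src2 A a = tgt2 A \<alpha> \<and> tgt2 A a = tgt2 A \<alpha>'}
                        {b\<in>Cell B. src2 B b = Fm F (tgt2 A \<alpha>) \<and> tgt2 B b = Fm F (tgt2 A \<alpha>')}"
      using FF[rule_format, OF A.tgt_Hom[OF a(1)] A.tgt_Hom[OF a(2)]] a d by simp
    have b2: "inj_on (Fc F) {a\<in>Cell A. src2 A a = src2 A \<alpha> \<and> tgt2 A a = tgt2 A \<alpha>'}"
      using bij_betw_imp_inj_on[OF FF[rule_format, OF A.src_Hom[OF a(1)] A.tgt_Hom[OF a(2)]]] a d by simp
    show "bij_betw (\<lambda>(a, s0, s1, b). (Fc F a, Fc F s0, Fc F s1, Fc F b))
       {q \<in> Cell (VV (HD A)). (case q of (a, s0, s1, b) \<Rightarrow> a) = \<alpha> \<and> (case q of (a, s0, s1, b) \<Rightarrow> b) = \<alpha>'}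
       {q \<in> Cell (VV (HD B)). (case q of (a, s0, s1, b) \<Rightarrow> a) = Fc F \<alpha> \<and> (case q of (a, s0, s1, b) \<Rightarrow> b) = Fc F \<alpha>'}"
      unfolding bij_betw_def
    proof (intro conjI)
      show "inj_on (\<lambda>(a, s0, s1, b). (Fc F a, Fc F s0, Fc F s1, Fc F b))
        {q \<in> Cell (VV (HD A)). (case q of (a, s0, s1, b) \<Rightarrow> a) = \<alpha> \<and> (case q of (a, s0, s1, b) \<Rightarrow> b) = \<alpha>'}"
      proof (rule inj_onI)
        fix q q' assume q: "q \<in> {q \<in> Cell (VV (HD A)). (case q of (a, s0, s1, b) \<Rightarrow> a) = \<alpha> \<and> (case q of (a, s0, s1, b) \<Rightarrow> b) = \<alpha>'}"
          and q': "q' \<in> {q \<in> Cell (VV (HD A)). (case q of (a, s0, s1, b) \<Rightarrow> a) = \<alpha> \<and> (case q of (a, s0, s1, b) \<Rightarrow> b) = \<alpha>'}"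
          and e: "(\<lambda>(a, s0, s1, b). (Fc F a, Fc F s0, Fc F s1, Fc F b)) q = (\<lambda>(a, s0, s1, b). (Fc F a, Fc F s0, Fc F s1, Fc F b)) q'"
        obtain s0 s1 where qq: "q = (\<alpha>, s0, s1, \<alpha>')" using q by (cases q) auto
        obtain r0 r1 where qq': "q' = (\<alpha>, r0, r1, \<alpha>')" using q' by (cases q') auto
        have h: "(\<alpha>, s0, s1, \<alpha>') \<in> Cell (VV (HD A))" "(\<alpha>, r0, r1, \<alpha>') \<in> Cell (VV (HD A))"
          "Fc F s0 = Fc F r0" "Fc F s1 = Fc F r1" using q q' e unfolding qq qq' by auto
        have "s0 = r0" by (rule inj_onD[OF bij_betw_imp_inj_on[OF b0]]) (use h in \<open>auto simp: VV_HD_Cell\<close>)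
        moreover have "s1 = r1" by (rule inj_onD[OF bij_betw_imp_inj_on[OF b1]]) (use h in \<open>auto simp: VV_HD_Cell\<close>)
        ultimately show "q = q'" unfolding qq qq' by simp
      qed
      show "(\<lambda>(a, s0, s1, b). (Fc F a, Fc F s0, Fc F s1, Fc F b)) `
        {q \<in> Cell (VV (HD A)). (case q of (a, s0, s1, b) \<Rightarrow> a) = \<alpha> \<and> (case q of (a, s0, s1, b) \<Rightarrow> b) = \<alpha>'} =
        {q \<in> Cell (VV (HD B)). (case q of (a, s0, s1, b) \<Rightarrow> a) = Fc F \<alpha> \<and> (case q of (a, s0, s1, b) \<Rightarrow> b) = Fc F \<alpha>'}"
      proof (intro equalityI subsetI)
        fix q assume "q \<in> (\<lambda>(a, s0, s1, b). (Fc F a, Fc F s0, Fc F s1, Fc F b)) `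
          {q \<in> Cell (VV (HD A)). (case q of (a, s0, s1, b) \<Rightarrow> a) = \<alpha> \<and> (case q of (a, s0, s1, b) \<Rightarrow> b) = \<alpha>'}"
        then obtain s0 s1 where q: "q = (Fc F \<alpha>, Fc F s0, Fc F s1, Fc F \<alpha>')" and m: "(\<alpha>, s0, s1, \<alpha>') \<in> Cell (VV (HD A))"
          by auto
        have "vcomp B (Fc F \<alpha>') (Fc F s0) = vcomp B (Fc F s1) (Fc F \<alpha>)"
          using m by (auto simp: VV_HD_Cell simp flip: F_vcomp)
        then show "q \<in> {q \<in> Cell (VV (HD B)). (case q of (a, s0, s1, b) \<Rightarrow> a) = Fc F \<alpha> \<and> (case q of (a, s0, s1, b) \<Rightarrow> b) = Fc F \<alpha>'}"
          using m unfolding q by (auto simp: VV_HD_Cell)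
      next
        fix q assume "q \<in> {q \<in> Cell (VV (HD B)). (case q of (a, s0, s1, b) \<Rightarrow> a) = Fc F \<alpha> \<and> (case q of (a, s0, s1, b) \<Rightarrow> b) = Fc F \<alpha>'}"
        then obtain t0 t1 where q: "q = (Fc F \<alpha>, t0, t1, Fc F \<alpha>')" and m: "(Fc F \<alpha>, t0, t1, Fc F \<alpha>') \<in> Cell (VV (HD B))"
          by (cases q) auto
        have m': "t0 \<in> Cell B" "t1 \<in> Cell B" "src2 B t0 = Fm F (src2 A \<alpha>)" "tgt2 B t0 = Fm F (src2 A \<alpha>')"
          "src2 B t1 = Fm F (tgt2 A \<alpha>)" "tgt2 B t1 = Fm F (tgt2 A \<alpha>')"
          "vcomp B (Fc F \<alpha>') t0 = vcomp B t1 (Fc F \<alpha>)"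
          using m a by (auto simp: VV_HD_Cell)
        obtain s0 where s0: "s0 \<in> Cell A" "src2 A s0 = src2 A \<alpha>" "tgt2 A s0 = src2 A \<alpha>'" "Fc F s0 = t0"
        proof -
          have "t0 \<in> Fc F ` {a\<in>Cell A. src2 A a = src2 A \<alpha> \<and> tgt2 A a = src2 A \<alpha>'}"
            unfolding bij_betw_imp_surj_on[OF b0] using m' by blast
          then obtain s where "s \<in> {a\<in>Cell A. src2 A a = src2 A \<alpha> \<and> tgt2 A a = src2 A \<alpha>'}" "t0 = Fc F s"
            by (rule imageE)
          then show ?thesis using that[of s] by simp
        qed
        obtain s1 where s1: "s1 \<in> Cell A" "src2 A s1 = tgt2 A \<alpha>" "tgt2 A s1 = tgt2 A \<alpha>'" "Fc F s1 = t1"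
        proof -
          have "t1 \<in> Fc F ` {a\<in>Cell A. src2 A a = tgt2 A \<alpha> \<and> tgt2 A a = tgt2 A \<alpha>'}"
            unfolding bij_betw_imp_surj_on[OF b1] using m' by blast
          then obtain s where "s \<in> {a\<in>Cell A. src2 A a = tgt2 A \<alpha> \<and> tgt2 A a = tgt2 A \<alpha>'}" "t1 = Fc F s"
            by (rule imageE)
          then show ?thesis using that[of s] by simp
        qed
        have "vcomp A \<alpha>' s0 = vcomp A s1 \<alpha>"
        proof (rule inj_onD[OF b2])
          show "Fc F (vcomp A \<alpha>' s0) = Fc F (vcomp A s1 \<alpha>)" using s0 s1 a m' by simp
        qed (use s0 s1 a in auto)
        then have "(\<alpha>, s0, s1, \<alpha>') \<in> Cell (VV (HD A))" using s0 s1 a d by (auto simp: VV_HD_Cell)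
        then show "q \<in> (\<lambda>(a, s0, s1, b). (Fc F a, Fc F s0, Fc F s1, Fc F b)) `
          {q \<in> Cell (VV (HD A)). (case q of (a, s0, s1, b) \<Rightarrow> a) = \<alpha> \<and> (case q of (a, s0, s1, b) \<Rightarrow> b) = \<alpha>'}"
          unfolding q using s0 s1 by (intro image_eqI[where x="(\<alpha>, s0, s1, \<alpha>')"]) auto
      qed
    qed
  qed
  show ?thesis unfolding biequivalence_def VV_HD_simps VVf_HDf_simps
    apply (intro conjI)
      apply (rule P1)
     apply (rule P2)
    apply (rule P3)
    done
qed


lemma fib_VV:
  assumes fb: "lack_fibration A B F"
  shows "lack_fibration (VV (HD A)) (VV (HD B)) (VVf (HDf F))"
proof -
  have L1: "\<And>z b. z \<in> Ob A \<Longrightarrow> equivalence B b \<Longrightarrow> hcod B b = Fo F z \<Longrightarrow>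
        (\<exists>a. equivalence A a \<and> hcod A a = z \<and> Fm F a = b)"
   and L2: "\<And>c \<beta>. c \<in> Hom A \<Longrightarrow> invertible2 B \<beta> \<Longrightarrow> tgt2 B \<beta> = Fm F c \<Longrightarrow>
        (\<exists>\<alpha>. invertible2 A \<alpha> \<and> tgt2 A \<alpha> = c \<and> Fc F \<alpha> = \<beta>)"
    using fb[unfolded lack_fibration_def, THEN conjunct1, rule_format]
          fb[unfolded lack_fibration_def, THEN conjunct2, rule_format] by blast+
  have P1: "\<forall>z\<in>Ob A. \<forall>b. equivalence (VV (HD B)) b \<longrightarrow> hcod B (src2 B b) = Fo F z \<longrightarrow>
        (\<exists>a. equivalence (VV (HD A)) a \<and> hcod A (src2 A a) = z \<and> Fc F a = b)"
  proof (intro ballI allI impI)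
    fix z b assume z: "z \<in> Ob A" and e: "equivalence (VV (HD B)) b" and h: "hcod B (src2 B b) = Fo F z"
    have bi: "invertible2 B b" and ge: "equivalence B (src2 B b)" using B.key[OF e] by auto
    obtain a0 where a0: "equivalence A a0" "hcod A a0 = z" "Fm F a0 = src2 B b" using L1[OF z ge h] by blast
    have a0h: "a0 \<in> Hom A" using a0 unfolding equivalence_def by blast
    obtain \<alpha>0 where \<alpha>0: "invertible2 A \<alpha>0" "tgt2 A \<alpha>0 = a0" "Fc F \<alpha>0 = inv2 B b"
    proof -
      have "invertible2 B (inv2 B b)" "tgt2 B (inv2 B b) = Fm F a0" using bi a0 by auto
      then show ?thesis using L2[OF a0h, of "inv2 B b"] that by blast
    qed
    have "equivalence (VV (HD A)) (inv2 A \<alpha>0)"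
      by (rule A.equiv_VV_inv[OF a0(1)]) (use \<alpha>0 in auto)
    moreover have "hcod A (src2 A (inv2 A \<alpha>0)) = z" using \<alpha>0 a0 by simp
    moreover have "Fc F (inv2 A \<alpha>0) = b" using \<alpha>0 bi by simp
    ultimately show "\<exists>a. equivalence (VV (HD A)) a \<and> hcod A (src2 A a) = z \<and> Fc F a = b" by blast
  qed
  have P2: "\<forall>c\<in>Cell A. \<forall>\<beta>. invertible2 (VV (HD B)) \<beta> \<longrightarrow> (case \<beta> of (a, s0, s1, b) \<Rightarrow> b) = Fc F c \<longrightarrow>
        (\<exists>\<alpha>. invertible2 (VV (HD A)) \<alpha> \<and> (case \<alpha> of (a, s0, s1, b) \<Rightarrow> b) = c
           \<and> (case \<alpha> of (a, s0, s1, b) \<Rightarrow> (Fc F a, Fc F s0, Fc F s1, Fc F b)) = \<beta>)"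
  proof (intro ballI allI impI)
    fix c \<beta> assume c: "c \<in> Cell A" and \<beta>i: "invertible2 (VV (HD B)) \<beta>" and t: "(case \<beta> of (a, s0, s1, b) \<Rightarrow> b) = Fc F c"
    obtain b t0 t1 d where \<beta>: "\<beta> = (b, t0, t1, d)" by (cases \<beta>) auto
    have d: "d = Fc F c" using t \<beta> by simp
    have ti: "invertible2 B t0" "invertible2 B t1" and m: "(b, t0, t1, d) \<in> Cell (VV (HD B))"
      using B.VV_inv_D[OF \<beta>i[unfolded \<beta>]] by auto
    have m': "b \<in> Cell B" "src2 B t0 = src2 B b" "tgt2 B t0 = Fm F (src2 A c)"
      "src2 B t1 = tgt2 B b" "tgt2 B t1 = Fm F (tgt2 A c)" "vcomp B (Fc F c) t0 = vcomp B t1 b"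
      using m c unfolding d by (auto simp: VV_HD_Cell)
    obtain s0 where s0: "invertible2 A s0" "tgt2 A s0 = src2 A c" "Fc F s0 = t0"
      using L2[OF A.src_Hom[OF c] ti(1) m'(3)] by blast
    obtain s1 where s1: "invertible2 A s1" "tgt2 A s1 = tgt2 A c" "Fc F s1 = t1"
      using L2[OF A.tgt_Hom[OF c] ti(2) m'(5)] by blast
    let ?a = "vcomp A (inv2 A s1) (vcomp A c s0)"
    have ac: "?a \<in> Cell A" using s0 s1 c by simp
    have Fa: "Fc F ?a = b"
    proof -
      have "Fc F ?a = vcomp B (inv2 B t1) (vcomp B (Fc F c) t0)" using s0 s1 c by simp
      also have "\<dots> = vcomp B (inv2 B t1) (vcomp B t1 b)" by (simp add: m')
      also have "\<dots> = vcomp B (vcomp B (inv2 B t1) t1) b"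
        by (rule B.vcomp_assoc) (use ti m' in auto)
      also have "\<dots> = b" using ti m' by simp
      finally show ?thesis .
    qed
    have eq: "vcomp A c s0 = vcomp A s1 ?a"
    proof -
      have "vcomp A s1 ?a = vcomp A (vcomp A s1 (inv2 A s1)) (vcomp A c s0)"
        by (rule A.vcomp_assoc) (use s0 s1 c in auto)
      then show ?thesis using s0 s1 c by simp
    qed
    have "invertible2 (VV (HD A)) (?a, s0, s1, c)"
      by (rule A.VV_inv[OF ac c s0(1) s1(1) _ _ _ _ eq]) (use c s0 s1 in auto)
    then show "\<exists>\<alpha>. invertible2 (VV (HD A)) \<alpha> \<and> (case \<alpha> of (a, s0, s1, b) \<Rightarrow> b) = c
           \<and> (case \<alpha> of (a, s0, s1, b) \<Rightarrow> (Fc F a, Fc F s0, Fc F s1, Fc F b)) = \<beta>"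
      unfolding \<beta> d using Fa s0 s1 by (intro exI[where x="(?a, s0, s1, c)"]) simp
  qed
  show ?thesis unfolding lack_fibration_def VV_HD_simps VVf_HDf_simps
    apply (rule conjI)
     apply (rule P1)
    apply (rule P2)
    done
qed

end


theorem theorem6p7:
  fixes A :: "('o,'m,'c) twocat" and B :: "('p,'n,'d) twocat"
    and F :: "('o,'m,'c,'p,'n,'d) twofun"
  assumes "is_2cat A" and "is_2cat B" and "is_2functor A B F"
  shows "(biequivalence A B F \<longleftrightarrow> double_biequivalence (HD A) (HD B) (HDf F))
       \<and> (lack_fibration A B F \<longleftrightarrow> double_fibration (HD A) (HD B) (HDf F))"
proof -
  interpret tf A B F using assms by (simp add: tf_def tc_def tf_axioms_def)
  show ?thesis
    unfolding double_biequivalence_def double_fibration_def HH_HD HHf_HDf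
    using bieq_VV fib_VV by blast
qed

end
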